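(* Let $p\ge 2$ be an integer and $\omega\ge1$ real, and let $k=\lfloor\log_p((p-1)\omega+1)\rfloor-1$. Then the minimal real resolution of $\omega$ is $$\widetilde\gamma_i(\omega)=p^{-i}\,\frac{p-1}{p-p^{-k}}\,\omega\quad(0\le i\le k),\qquad \widetilde\gamma_i(\omega)=0\quad(i>k).$$
   Context: A real resolution of $\omega$ is a sequence $(\gamma_i)_{i\ge0}$ with values in $\{0\}\cup[1,\infty)$ such that $\gamma_i\ge p\gamma_{i+1}$ for all $i$ and $\sum_{i\ge0}\gamma_i=\omega$. The minimal real resolution $(\widetilde\gamma_i(\omega))_{i\ge0}$ is the lexicographically smallest real resolution of $\omega$ (compared at the first index where two sequences differ). *)

theory Defs
  imports "HOL-Analysis.Analysis"
begin

definition real_resolution :: "real \<Rightarrow> real \<Rightarrow> (nat \<Rightarrow> real) \<Rightarrow> bool" where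
  "real_resolution p \<omega> \<gamma> \<longleftrightarrow>
     (\<forall>i. \<gamma> i = 0 \<or> \<gamma> i \<ge> 1) \<and> (\<forall>i. \<gamma> i \<ge> p * \<gamma> (Suc i)) \<and> \<gamma> sums \<omega>"

definition lex_less :: "(nat \<Rightarrow> real) \<Rightarrow> (nat \<Rightarrow> real) \<Rightarrow> bool" where
  "lex_less \<gamma> \<delta> \<longleftrightarrow> (\<exists>n. (\<forall>i<n. \<gamma> i = \<delta> i) \<and> \<gamma> n < \<delta> n)"

definition min_real_resolution :: "real \<Rightarrow> real \<Rightarrow> nat \<Rightarrow> real" where
  "min_real_resolution p \<omega> = (THE \<gamma>. real_resolution p \<omega> \<gamma> \<and>
      (\<forall>\<delta>. real_resolution p \<omega> \<delta> \<longrightarrow> \<delta> = \<gamma> \<or> lex_less \<gamma> \<delta>))"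

end

theory Submission
  imports Defs
begin


lemma res_nonneg:
  assumes "real_resolution P w d" shows "d i \<ge> 0"
  using assms unfolding real_resolution_def by (metis order.trans zero_le_one order_refl)

lemma res_upper:
  assumes "real_resolution P w d" "P > 1" shows "d i \<le> d 0 / P^i"
proof (induction i)
  case 0 then show ?case by simp
next
  case (Suc i)
  have "P * d (Suc i) \<le> d i" using assms(1) unfolding real_resolution_def by blast
  hence "d (Suc i) \<le> d i / P" using assms(2) by (simp add: field_simps)
  also have "\<dots> \<le> d 0 / P^i / P" using Suc assms(2) by (intro divide_right_mono) auto
  finally show ?case by (simp add: mult.commute)
qed

lemma res_back:
  assumes "real_resolution P w d" "P > 1" "d m \<ge> 1"
  shows "\<forall>i. i + j = m \<longrightarrow> d i \<ge> P^j"
proof (induction j)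
  case 0 then show ?case using assms by simp
next
  case (Suc j)
  show ?case
  proof (intro allI impI)
    fix i assume "i + Suc j = m"
    hence "Suc i + j = m" by simp
    hence "d (Suc i) \<ge> P^j" using Suc by blast
    moreover have "P * d (Suc i) \<le> d i" using assms(1) unfolding real_resolution_def by blast
    ultimately show "d i \<ge> P ^ Suc j" using assms(2)
      by (smt (verit) mult_left_mono power_Suc)
  qed
qed

lemma res_fin:
  assumes "real_resolution P w d" "P > 1" "w > 0"
  obtains m where "d m \<ge> 1" "\<forall>i>m. d i = 0"
proof -
  obtain N where N: "d 0 < P^N" using real_arch_pow assms(2) by blast
  have z: "d i = 0" if "i \<ge> N" for i
  proof -
    have "d i \<le> d 0 / P^i" by (rule res_upper[OF assms(1,2)])
    also have "\<dots> < 1"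
    proof -
      have "P^N \<le> P^i" using that assms(2) by (simp add: power_increasing)
      hence "d 0 < P^i" using N by linarith
      moreover have "P^i > 0" using assms(2) by simp
      ultimately show ?thesis by (simp add: divide_less_eq)
    qed
    finally show ?thesis using assms(1) unfolding real_resolution_def by force
  qed
  define Z where "Z = {i. d i \<noteq> 0}"
  have fZ: "finite Z" unfolding Z_def
  proof (rule finite_subset[of _ "{..<N}"])
    show "{i. d i \<noteq> 0} \<subseteq> {..<N}" 
    proof
      fix x assume "x \<in> {i. d i \<noteq> 0}"
      hence "d x \<noteq> 0" by simp
      hence "\<not> N \<le> x" using z by blast
      thus "x \<in> {..<N}" by simp
    qed
  qed simp
  have "Z \<noteq> {}"
  proof
    assume "Z = {}"
    hence "d = (\<lambda>_. 0)" unfolding Z_def by auto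
    hence "w = 0" using assms(1) unfolding real_resolution_def
      by (metis sums_zero sums_unique2)
    thus False using assms(3) by simp
  qed
  define m where "m = Max Z"
  have "m \<in> Z" unfolding m_def using fZ \<open>Z \<noteq> {}\<close> by simp
  hence "d m \<ge> 1" unfolding Z_def using assms(1) unfolding real_resolution_def by force
  moreover have "\<forall>i>m. d i = 0"
    using fZ unfolding m_def Z_def by (metis Max_ge leD mem_Collect_eq)
  ultimately show ?thesis using that by blast
qed


lemma res_key:
  assumes res: "real_resolution P w d" and P: "P > 1" and w: "w > 0"
    and K: "(P - 1) * w + 1 < P^(K+2)"
  shows "w \<le> d 0 * (\<Sum>i<Suc K. 1 / P^i)"
    and "d 0 * (\<Sum>i<Suc K. 1 / P^i) = w \<Longrightarrow> d i = (if i \<le> K then d 0 / P^i else 0)"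
proof -
  obtain m where m1: "d m \<ge> 1" and m0: "\<forall>i>m. d i = 0" using res_fin[OF res P w] by blast
  have wsum: "w = (\<Sum>i<Suc n. d i)" if "n \<ge> m" for n
  proof -
    have "d sums (\<Sum>i\<in>{..<Suc n}. d i)"
      by (rule sums_finite) (use m0 that in auto)
    moreover have "d sums w" using res unfolding real_resolution_def by blast
    ultimately show ?thesis using sums_unique2 by blast
  qed
  note bk = res_back[OF res P m1]
  have "(\<Sum>i<Suc m. P^i) = (\<Sum>i<Suc m. P^(m - i))"
    by (subst sum.nat_diff_reindex[symmetric]) simp
  also have "\<dots> \<le> (\<Sum>i<Suc m. d i)"
    by (rule sum_mono) (use bk in auto)
  also have "\<dots> = w" using wsum[of m] by simp
  finally have ge: "(\<Sum>i<Suc m. P^i) \<le> w" .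
  have "(\<Sum>i<Suc m. P^i) = (P^Suc m - 1) / (P - 1)" using P by (intro geometric_sum) simp
  with ge have "(P^Suc m - 1) / (P - 1) \<le> w" by simp
  hence "P^Suc m - 1 \<le> w * (P - 1)" using P by (simp add: pos_divide_le_eq)
  hence "P^Suc m \<le> (P - 1) * w + 1" by (simp add: algebra_simps)
  hence "P^Suc m < P^(K+2)" using K by linarith
  hence "Suc m < K + 2" using P power_strict_increasing_iff by blast
  hence mK: "m \<le> K" by simp
  have wK: "w = (\<Sum>i<Suc K. d i)" using wsum mK by blast
  have "(\<Sum>i<Suc K. d i) \<le> (\<Sum>i<Suc K. d 0 * (1 / P^i))"
    by (rule sum_mono) (use res_upper[OF res P] in simp)
  also have "\<dots> = d 0 * (\<Sum>i<Suc K. 1 / P^i)" by (simp only: sum_distrib_left)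
  finally show "w \<le> d 0 * (\<Sum>i<Suc K. 1 / P^i)" using wK by simp
  assume eq: "d 0 * (\<Sum>i<Suc K. 1 / P^i) = w"
  have "(\<Sum>i<Suc K. d 0 / P^i - d i) = d 0 * (\<Sum>i<Suc K. 1 / P^i) - (\<Sum>i<Suc K. d i)"
    by (simp only: sum_subtractf sum_distrib_left times_divide_eq_right mult_1_right)
  also have "\<dots> = 0" using eq wK by simp
  finally have z: "(\<Sum>i<Suc K. d 0 / P^i - d i) = 0" .
  have nn: "\<forall>i\<in>{..<Suc K}. 0 \<le> d 0 / P^i - d i" using res_upper[OF res P] by simp
  show "d i = (if i \<le> K then d 0 / P^i else 0)"
  proof (cases "i \<le> K")
    case True
    have "\<forall>x\<in>{..<Suc K}. d 0 / P^x - d x = 0"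
      using sum_nonneg_eq_0_iff[of "{..<Suc K}" "\<lambda>x. d 0 / P^x - d x"] z nn by blast
    hence "d 0 / P^i - d i = 0" using True by simp
    thus ?thesis using True by simp
  next
    case False thus ?thesis using m0 mK by auto
  qed
qed


lemma geoS: assumes "P > (1::real)" shows "(\<Sum>i<Suc K. 1 / P^i) * (P - 1) = P - 1 / P^K"
proof (induction K)
  case 0 then show ?case by simp
next
  case (Suc K)
  have "(\<Sum>i<Suc (Suc K). 1 / P^i) * (P - 1) = (\<Sum>i<Suc K. 1 / P^i) * (P - 1) + (P - 1) / P^Suc K"
    by (simp add: algebra_simps)
  also have "\<dots> = P - 1 / P^K + (P - 1) / P^Suc K" using Suc by simp
  also have "\<dots> = P - 1 / P^Suc K" using assms by (simp add: field_simps)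
  finally show ?case .
qed

lemma geoS2: assumes "P > (1::real)" shows "P^K * (\<Sum>i<Suc K. 1 / P^i) = (\<Sum>i<Suc K. P^i)"
proof -
  have "P^K * (\<Sum>i<Suc K. 1 / P^i) = (\<Sum>i<Suc K. P^(K - i))"
    unfolding sum_distrib_left
  proof (rule sum.cong)
    fix i assume "i \<in> {..<Suc K}"
    hence "i \<le> K" by simp
    thus "P ^ K * (1 / P ^ i) = P ^ (K - i)" using assms by (simp add: power_diff)
  qed simp
  also have "\<dots> = (\<Sum>i<Suc K. P^i)"
    by (subst sum.nat_diff_reindex[symmetric]) simp
  finally show ?thesis .
qed

theorem mainTheorem7:
  fixes p :: nat and \<omega> :: real
  assumes "p \<ge> 2" and "\<omega> \<ge> 1"
  defines "k \<equiv> \<lfloor>log (real p) ((real p - 1) * \<omega> + 1)\<rfloor> - 1"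
  shows "\<forall>i::nat. min_real_resolution (real p) \<omega> i =
           (if int i \<le> k
            then (real p) powi (- int i) * ((real p - 1) / (real p - (real p) powi (- k))) * \<omega>
            else 0)"
proof -
  define P where "P = real p"
  have P1: "P > 1" using assms(1) unfolding P_def by simp
  define X where "X = (P - 1) * \<omega> + 1"
  have XP: "X \<ge> P" unfolding X_def using P1 assms(2)
    by (smt (verit) mult_left_mono mult_cancel_left1)
  have X0: "X > 0" using XP P1 by simp
  define L where "L = \<lfloor>log P X\<rfloor>"
  have kL: "k = L - 1" unfolding k_def L_def X_def P_def by simp
  have "log P P \<le> log P X" using XP P1 by simp
  hence "1 \<le> log P X" using P1 by simp
  hence L1: "L \<ge> 1" unfolding L_def by linarith
  define K where "K = nat k"
  have kK: "k = int K" unfolding K_def using L1 kL by simp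
  have LK: "L = int (K + 1)" using kK kL by simp
  have fl: "P powr L \<le> X \<and> X < P powr (L + 1)"
    using floor_log_eq_powr_iff[OF X0 P1] L_def by blast
  have "P powr (real_of_int L) = P^(K+1)" unfolding LK using P1
    by (metis of_int_of_nat_eq powr_realpow zero_less_one order.strict_trans)
  moreover have "P powr (real_of_int L + 1) = P^(K+2)"
  proof -
    have "real_of_int L + 1 = real (K+2)" unfolding LK by simp
    hence "P powr (real_of_int L + 1) = P powr (real (K+2))" by simp
    also have "\<dots> = P^(K+2)" using P1 by (intro powr_realpow) simp
    finally show ?thesis .
  qed
  ultimately have lo: "P^(K+1) \<le> X" and hi: "X < P^(K+2)" using fl by auto
  define S where "S = (\<Sum>i<Suc K. 1 / P^i)"
  have S0: "S > 0" unfolding S_def using P1 by (intro sum_pos) auto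
  define c where "c = \<omega> / S"
  define g where "g = (\<lambda>i. if i \<le> K then c / P^i else 0)"
  have w0: "\<omega> > 0" using assms(2) by simp
  have cS: "c * S = \<omega>" unfolding c_def using S0 by simp
  have "P^K * S = (\<Sum>i<Suc K. P^i)" unfolding S_def by (rule geoS2[OF P1])
  also have "\<dots> = (P^Suc K - 1) / (P - 1)" using P1 by (intro geometric_sum) simp
  also have "\<dots> \<le> \<omega>"
  proof -
    have "P^Suc K - 1 \<le> \<omega> * (P - 1)" using lo unfolding X_def by (simp add: algebra_simps)
    thus ?thesis using P1 by (simp add: pos_divide_le_eq)
  qed
  finally have "P^K \<le> c" unfolding c_def using S0 by (simp add: pos_le_divide_eq)
  have gres: "real_resolution P \<omega> g"
    unfolding real_resolution_def
  proof (intro conjI allI)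
    fix i
    show "g i = 0 \<or> g i \<ge> 1"
    proof (cases "i \<le> K")
      case True
      have "P^i \<le> P^K" using True P1 by (simp add: power_increasing)
      hence "P^i \<le> c" using \<open>P^K \<le> c\<close> by linarith
      hence "c / P^i \<ge> 1" using P1 by simp
      thus ?thesis unfolding g_def using True by simp
    qed (simp add: g_def)
    show "g i \<ge> P * g (Suc i)"
    proof (cases "Suc i \<le> K")
      case True
      have "P * (c / P^Suc i) = c / P^i" using P1 by simp
      thus ?thesis unfolding g_def using True by simp
    next
      case False
      have "c \<ge> 0" unfolding c_def using S0 w0 by simp
      thus ?thesis unfolding g_def using False P1 by simp
    qed
  next
    have "g sums (\<Sum>i\<in>{..<Suc K}. g i)" by (rule sums_finite) (auto simp: g_def)
    moreover have "(\<Sum>i\<in>{..<Suc K}. g i) = c * S"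
      unfolding g_def S_def sum_distrib_left by (intro sum.cong) auto
    ultimately show "g sums \<omega>" using cS by simp
  qed
  have g0: "g 0 = c" unfolding g_def by simp
  have lowb: "\<delta> 0 \<ge> c" and equ: "\<delta> 0 = c \<Longrightarrow> \<delta> = g" if "real_resolution P \<omega> \<delta>" for \<delta>
  proof -
    have hi': "(P - 1) * \<omega> + 1 < P^(K+2)" using hi unfolding X_def .
    have "\<omega> \<le> \<delta> 0 * S" unfolding S_def by (rule res_key(1)[OF that P1 w0 hi'])
    thus "\<delta> 0 \<ge> c" unfolding c_def using S0 by (simp add: pos_divide_le_eq)
    assume "\<delta> 0 = c"
    hence "\<delta> 0 * S = \<omega>" using cS by simp
    hence de: "\<delta> i = (if i \<le> K then \<delta> 0 / P^i else 0)" for i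
      unfolding S_def by (rule res_key(2)[OF that P1 w0 hi'])
    show "\<delta> = g"
    proof
      fix i
      show "\<delta> i = g i" unfolding g_def de[of i] \<open>\<delta> 0 = c\<close> ..
    qed
  qed
  have "min_real_resolution P \<omega> = g"
    unfolding min_real_resolution_def
  proof (rule the_equality)
    show "real_resolution P \<omega> g \<and> (\<forall>\<delta>. real_resolution P \<omega> \<delta> \<longrightarrow> \<delta> = g \<or> lex_less g \<delta>)"
    proof (intro conjI allI impI gres)
      fix \<delta> assume d: "real_resolution P \<omega> \<delta>"
      show "\<delta> = g \<or> lex_less g \<delta>"
      proof (cases "\<delta> 0 = c")
        case True thus ?thesis using equ[OF d] by blast
      next
        case False
        hence "g 0 < \<delta> 0" using lowb[OF d] g0 by simp
        thus ?thesis unfolding lex_less_def by (intro disjI2 exI[of _ 0]) simp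
      qed
    qed
  next
    fix \<gamma> assume h: "real_resolution P \<omega> \<gamma> \<and> (\<forall>\<delta>. real_resolution P \<omega> \<delta> \<longrightarrow> \<delta> = \<gamma> \<or> lex_less \<gamma> \<delta>)"
    hence "g = \<gamma> \<or> lex_less \<gamma> g" using gres by blast
    thus "\<gamma> = g"
    proof
      assume "lex_less \<gamma> g"
      then obtain n where n1: "\<forall>i<n. \<gamma> i = g i" and n2: "\<gamma> n < g n" unfolding lex_less_def by blast
      have lb: "\<gamma> 0 \<ge> c" using lowb h by blast
      show "\<gamma> = g"
      proof (cases n)
        case 0 thus ?thesis using n2 lb g0 by simp
      next
        case (Suc n')
        hence "\<gamma> 0 = c" using n1 g0 by auto
        hence "\<gamma> = g" using equ h by blast
        thus ?thesis .
      qed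
    qed simp
  qed
  show ?thesis
  proof
    fix i
    have pk: "P powi (- int K) = 1 / P^K" by (simp add: power_int_minus_divide)
    have pi: "P powi (- int i) = 1 / P^i" by (simp add: power_int_minus_divide)
    have Seq: "S = (P - 1 / P^K) / (P - 1)" unfolding S_def using geoS[OF P1, of K] P1
      by (simp add: eq_divide_eq)
    have "P - 1 / P^K > 0" using S0 Seq P1 by (simp add: zero_less_divide_iff)
    hence cc: "c = (P - 1) / (P - 1 / P^K) * \<omega>" unfolding c_def Seq by simp
    show "min_real_resolution (real p) \<omega> i =
           (if int i \<le> k
            then (real p) powi (- int i) * ((real p - 1) / (real p - (real p) powi (- k))) * \<omega>
            else 0)"
      unfolding P_def[symmetric] \<open>min_real_resolution P \<omega> = g\<close> g_def cc kK
      by (simp add: pk pi)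
  qed
qed

end
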